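(* Let $K=(\mathbf{k}_1,\dots,\mathbf{k}_6)\in(\mathbb{R}^2)^6$ be a 3-RPR configuration whose base anchor points $\mathbf{k}_1,\mathbf{k}_2,\mathbf{k}_3\in\mathbb{R}^2$ are fixed and whose platform anchor points are $\mathbf{k}_j=\mathbf{R}\mathbf{p}_j+\mathbf{t}$ ($j=4,5,6$) for fixed $\mathbf{p}_4,\mathbf{p}_5,\mathbf{p}_6\in\mathbb{R}^2$ and a pose $(\mathbf{R},\mathbf{t})$ with $\mathbf{R}\in SO(2)$, $\mathbf{t}\in\mathbb{R}^2$. Let $D$ be either $D^{\blacktriangle}_{\vartriangle}$ or $D^{\vartriangle}_{\vartriangle}$. If $K'=(\mathbf{k}'_1,\dots,\mathbf{k}'_6)$ is a closest configuration to $K$ on the collinearity variety $C_B=0$, i.e. a global minimizer of $D(K,K')$ over all $K'\in\mathbb{R}^{12}$ with $C_B(K')=0$, then $\mathbf{k}'_1,\mathbf{k}'_2,\mathbf{k}'_3$ are the pedal points (orthogonal projections) of $\mathbf{k}_1,\mathbf{k}_2,\mathbf{k}_3$ on the line of regression of $\mathbf{k}_1,\mathbf{k}_2,\mathbf{k}_3$. Moreover, the distance $\min\{D(K,K'):C_B(K')=0\}$ depends only on the geometry of the manipulator, i.e. it is independent of the pose $(\mathbf{R},\mathbf{t})$.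
   Context: A configuration is $K'=(\mathbf{k}'_1,\dots,\mathbf{k}'_6)$ with $\mathbf{k}'_i=(c_i,d_i)^T\in\mathbb{R}^2$, viewed as a point of $\mathbb{R}^{12}$. For indices $i,j$ define the segment distance $d(\vert_{ij},\vert'_{ij})^2=\frac13\big[\|\mathbf{k}_i-\mathbf{k}'_i\|^2+\|\mathbf{k}_j-\mathbf{k}'_j\|^2+(\mathbf{k}_i-\mathbf{k}'_i)^T(\mathbf{k}_j-\mathbf{k}'_j)\big]$ and for $\{i,j,k\}$ the triangle distance $d(\blacktriangle_{ijk},\blacktriangle'_{ijk})^2=\frac16\big[\sum_{x=i,j,k}\|\mathbf{k}_x-\mathbf{k}'_x\|^2+(\mathbf{k}_i-\mathbf{k}'_i)^T(\mathbf{k}_k-\mathbf{k}'_k)+(\mathbf{k}_i-\mathbf{k}'_i)^T(\mathbf{k}_j-\mathbf{k}'_j)+(\mathbf{k}_k-\mathbf{k}'_k)^T(\mathbf{k}_j-\mathbf{k}'_j)\big]$. Then $D^{\blacktriangle}_{\vartriangle}(K,K')^2=\frac17\big[\sum_{(i,j)\in I_3}d(\vert_{ij},\vert'_{ij})^2+d(\blacktriangle_{456},\blacktriangle'_{456})^2\big]$ with $I_3=\{(1,4),(2,5),(3,6),(1,2),(2,3),(1,3)\}$, and $D^{\vartriangle}_{\vartriangle}(K,K')^2=\frac19\sum_{(i,j)\in I_4}d(\vert_{ij},\vert'_{ij})^2$ with $I_4=\{(1,2),(2,3),(1,3),(1,4),(2,5),(3,6),(4,5),(5,6),(4,6)\}$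 (distances are the nonnegative square roots). The collinearity polynomial of the base is $C_B(K')=\det\begin{pmatrix}1&1&1\\ c_1&c_2&c_3\\ d_1&d_2&d_3\end{pmatrix}$. The line of regression of three points is the line minimizing the sum of squared orthogonal distances to these points; the pedal point of a point on a line is its orthogonal projection onto that line. *)

theory Defs
  imports "HOL-Analysis.Analysis"
begin

text \<open>Points of the plane are vectors in real^2; a configuration
  K = (k_1,...,k_6) is a function from indices to points, only the
  indices 1..6 are used.\<close>

type_synonym point = "real ^ 2"
type_synonym config = "nat \<Rightarrow> real ^ 2"

definition seg_dist2 :: "config \<Rightarrow> config \<Rightarrow> nat \<Rightarrow> nat \<Rightarrow> real" where
  "seg_dist2 K K' i j = (1/3) * ((norm (K i - K' i))\<^sup>2 + (norm (K j - K' j))\<^sup>2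
      + (K i - K' i) \<bullet> (K j - K' j))"

definition tri_dist2 :: "config \<Rightarrow> config \<Rightarrow> nat \<Rightarrow> nat \<Rightarrow> nat \<Rightarrow> real" where
  "tri_dist2 K K' i j k = (1/6) * ((norm (K i - K' i))\<^sup>2 + (norm (K j - K' j))\<^sup>2
      + (norm (K k - K' k))\<^sup>2
      + (K i - K' i) \<bullet> (K k - K' k) + (K i - K' i) \<bullet> (K j - K' j)
      + (K k - K' k) \<bullet> (K j - K' j))"

definition I3 :: "(nat \<times> nat) list" where
  "I3 = [(1,4),(2,5),(3,6),(1,2),(2,3),(1,3)]"

definition I4 :: "(nat \<times> nat) list" where
  "I4 = [(1,2),(2,3),(1,3),(1,4),(2,5),(3,6),(4,5),(5,6),(4,6)]"

definition D_tri :: "config \<Rightarrow> config \<Rightarrow> real" where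
  "D_tri K K' = sqrt ((1/7) * ((\<Sum>(i,j)\<leftarrow>I3. seg_dist2 K K' i j) + tri_dist2 K K' 4 5 6))"

definition D_seg :: "config \<Rightarrow> config \<Rightarrow> real" where
  "D_seg K K' = sqrt ((1/9) * (\<Sum>(i,j)\<leftarrow>I4. seg_dist2 K K' i j))"

definition C_B :: "config \<Rightarrow> real" where
  "C_B K' = det (vector [vector [1, 1, 1],
                         vector [K' 1 $ 1, K' 2 $ 1, K' 3 $ 1],
                         vector [K' 1 $ 2, K' 2 $ 2, K' 3 $ 2]] :: real ^ 3 ^ 3)"

definition SO2 :: "(real ^ 2 ^ 2) set" where
  "SO2 = {R. orthogonal_matrix R \<and> det R = 1}"

definition rpr_config :: "config \<Rightarrow> config \<Rightarrow> real^2^2 \<Rightarrow> point \<Rightarrow> config" where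
  "rpr_config b p R t = (\<lambda>i. if i \<in> {1,2,3} then b i else R *v p i + t)"

definition line :: "point \<Rightarrow> point \<Rightarrow> point set" where
  "line a v = range (\<lambda>s. a + s *\<^sub>R v)"

definition is_regression_line :: "point \<Rightarrow> point \<Rightarrow> config \<Rightarrow> bool" where
  "is_regression_line a v q \<longleftrightarrow> v \<noteq> 0 \<and>
     (\<forall>c w. w \<noteq> 0 \<longrightarrow>
        (\<Sum>i\<in>{1,2,3::nat}. (infdist (q i) (line a v))\<^sup>2)
          \<le> (\<Sum>i\<in>{1,2,3::nat}. (infdist (q i) (line c w))\<^sup>2))"

definition pedal :: "point \<Rightarrow> point \<Rightarrow> point \<Rightarrow> point" where
  "pedal a v x = a + (((x - a) \<bullet> v) / (v \<bullet> v)) *\<^sub>R v"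

end

theory Submission
  imports Defs
begin


lemma norm2_coord: "(norm (u::real^2))\<^sup>2 = (u$1)\<^sup>2 + (u$2)\<^sup>2"
  unfolding power2_norm_eq_inner by (simp add: inner_vec_def sum_2 power2_eq_square)
lemma inner_coord: "(u::real^2) \<bullet> w = u$1 * w$1 + u$2 * w$2"
  by (simp add: inner_vec_def sum_2)

lemma vec2_eq: "(u::real^2) = w \<longleftrightarrow> u$1 = w$1 \<and> u$2 = w$2"
  by (simp add: vec_eq_iff forall_2)

lemma lag_aux:
  fixes d1 d2 v1 v2 r :: real
  assumes "v1\<^sup>2 + v2\<^sup>2 \<noteq> 0"
  shows "(d1 - r * v1)\<^sup>2 + (d2 - r * v2)\<^sup>2 = (d1 * v2 - d2 * v1)\<^sup>2 / (v1\<^sup>2 + v2\<^sup>2)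
      + (d1 * v1 + d2 * v2 - r * (v1\<^sup>2 + v2\<^sup>2))\<^sup>2 / (v1\<^sup>2 + v2\<^sup>2)"
proof -
  have "(d1 * v2 - d2 * v1)\<^sup>2 + (d1 * v1 + d2 * v2 - r * (v1\<^sup>2 + v2\<^sup>2))\<^sup>2
     = ((d1 - r * v1)\<^sup>2 + (d2 - r * v2)\<^sup>2) * (v1\<^sup>2 + v2\<^sup>2)" by algebra
  then show ?thesis using assms by (simp add: add_divide_distrib[symmetric])
qed

lemma infdist_line:
  fixes x a v :: "real^2"
  assumes v: "v \<noteq> 0"
  shows "(infdist x (line a v))\<^sup>2 = ((x-a)$1 * v$2 - (x-a)$2 * v$1)\<^sup>2 / ((v$1)\<^sup>2 + (v$2)\<^sup>2)"
proof -
  have s: "(v$1)\<^sup>2 + (v$2)\<^sup>2 > 0" using v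
    by (metis norm2_coord zero_less_norm_iff zero_less_power)
  define d1 where "d1 = (x-a)$1"
  define d2 where "d2 = (x-a)$2"
  define P where "P = pedal a v x"
  have Pin: "P \<in> line a v" unfolding P_def pedal_def line_def by auto
  have key: "(dist x (a + r *\<^sub>R v))\<^sup>2 = (d1 * v$2 - d2 * v$1)\<^sup>2 / ((v$1)\<^sup>2 + (v$2)\<^sup>2)
      + (d1 * v$1 + d2 * v$2 - r * ((v$1)\<^sup>2 + (v$2)\<^sup>2))\<^sup>2 / ((v$1)\<^sup>2 + (v$2)\<^sup>2)" for r
  proof -
    have "(dist x (a + r *\<^sub>R v))\<^sup>2 = (d1 - r * v$1)\<^sup>2 + (d2 - r * v$2)\<^sup>2"
      unfolding dist_norm norm2_coord d1_def d2_def by (simp add: algebra_simps)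
    also have "\<dots> = (d1 * v$2 - d2 * v$1)\<^sup>2 / ((v$1)\<^sup>2 + (v$2)\<^sup>2)
      + (d1 * v$1 + d2 * v$2 - r * ((v$1)\<^sup>2 + (v$2)\<^sup>2))\<^sup>2 / ((v$1)\<^sup>2 + (v$2)\<^sup>2)"
      by (rule lag_aux) (use s in linarith)
    finally show ?thesis .
  qed
  have Pd: "(dist x P)\<^sup>2 = (d1 * v$2 - d2 * v$1)\<^sup>2 / ((v$1)\<^sup>2 + (v$2)\<^sup>2)"
  proof -
    have "P = a + (((x - a) \<bullet> v) / (v \<bullet> v)) *\<^sub>R v" unfolding P_def pedal_def by simp
    moreover have "d1 * v$1 + d2 * v$2 - (((x - a) \<bullet> v) / (v \<bullet> v)) * ((v$1)\<^sup>2 + (v$2)\<^sup>2) = 0"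
      using s unfolding inner_coord d1_def d2_def by (simp add: power2_eq_square)
    ultimately show ?thesis using key by simp
  qed
  have le: "infdist x (line a v) \<le> dist x P" using Pin by (rule infdist_le)
  have ge: "dist x P \<le> infdist x (line a v)"
  proof -
    have ne: "line a v \<noteq> {}" using Pin by auto
    have "dist x P \<le> (INF y\<in>line a v. dist x y)"
    proof (rule cINF_greatest[OF ne])
      fix y assume "y \<in> line a v"
      then obtain r where y: "y = a + r *\<^sub>R v" unfolding line_def by auto
      have "(dist x P)\<^sup>2 \<le> (dist x y)\<^sup>2" unfolding y Pd key using s by simp
      then show "dist x P \<le> dist x y" by (rule power2_le_imp_le) simp
    qed
    then show ?thesis using infdist_notempty[OF ne] by simp
  qed
  have "infdist x (line a v) = dist x P" using le ge by simp
  then show ?thesis using Pd d1_def d2_def by simp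
qed



definition Gc :: "real \<Rightarrow> real \<Rightarrow> real \<Rightarrow> real \<Rightarrow> real \<Rightarrow> real" where
  "Gc A C x1 x2 x3 = A*((x1-(x1+x2+x3)/3)\<^sup>2+(x2-(x1+x2+x3)/3)\<^sup>2+(x3-(x1+x2+x3)/3)\<^sup>2) + C*((x1+x2+x3)/3)\<^sup>2"

lemma coll_normal:
  fixes m1 m2 k x1 x2 x3 y1 y2 y3 :: real
  assumes "m1\<^sup>2 + m2\<^sup>2 \<noteq> 0" "m1*x1+m2*y1 = k" "m1*x2+m2*y2 = k" "m1*x3+m2*y3 = k"
  shows "(x2-x1)*(y3-y1) - (x3-x1)*(y2-y1) = 0"
proof -
  have e1: "m1*(x2-x1) = -(m2*(y2-y1))" "m1*(x3-x1) = -(m2*(y3-y1))"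
    using assms(2-4) by (simp_all add: algebra_simps)
  have e2: "m2*(y2-y1) = -(m1*(x2-x1))" "m2*(y3-y1) = -(m1*(x3-x1))"
    using e1 by simp_all
  have a: "m1 * ((x2-x1)*(y3-y1) - (x3-x1)*(y2-y1)) = 0"
  proof -
    have "m1 * ((x2-x1)*(y3-y1) - (x3-x1)*(y2-y1)) = (m1*(x2-x1))*(y3-y1) - (m1*(x3-x1))*(y2-y1)"
      by (simp add: algebra_simps)
    also have "\<dots> = 0" unfolding e1 by (simp add: algebra_simps)
    finally show ?thesis .
  qed
  have b: "m2 * ((x2-x1)*(y3-y1) - (x3-x1)*(y2-y1)) = 0"
  proof -
    have "m2 * ((x2-x1)*(y3-y1) - (x3-x1)*(y2-y1)) = (x2-x1)*(m2*(y3-y1)) - (x3-x1)*(m2*(y2-y1))"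
      by (simp add: algebra_simps)
    also have "\<dots> = 0" unfolding e2 by (simp add: algebra_simps)
    finally show ?thesis .
  qed
  show ?thesis using a b assms(1) by auto
qed

lemma normal_coll:
  fixes x1 x2 x3 y1 y2 y3 :: real
  assumes "(x2-x1)*(y3-y1) - (x3-x1)*(y2-y1) = 0"
  shows "\<exists>m1 m2 k. m1\<^sup>2 + m2\<^sup>2 \<noteq> 0 \<and> m1*x1+m2*y1 = k \<and> m1*x2+m2*y2 = k \<and> m1*x3+m2*y3 = k"
proof (cases "x2 \<noteq> x1 \<or> y2 \<noteq> y1")
  case True
  show ?thesis
    apply (rule exI[of _ "-(y2-y1)"], rule exI[of _ "x2-x1"], rule exI[of _ "-(y2-y1)*x1+(x2-x1)*y1"])
    using True assms by (auto simp: algebra_simps)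
next
  case False
  then have e: "x2 = x1" "y2 = y1" by auto
  show ?thesis
  proof (cases "x3 \<noteq> x1 \<or> y3 \<noteq> y1")
    case True
    show ?thesis
      apply (rule exI[of _ "-(y3-y1)"], rule exI[of _ "x3-x1"], rule exI[of _ "-(y3-y1)*x1+(x3-x1)*y1"])
      using True e by (auto simp: algebra_simps)
  next
    case False
    then show ?thesis using e
      by (intro exI[of _ 1] exI[of _ 0] exI[of _ x1]) auto
  qed
qed

lemma Gc_zero_mean: "x1+x2+x3 = 0 \<Longrightarrow> Gc A C x1 x2 x3 = A*(x1\<^sup>2+x2\<^sup>2+x3\<^sup>2)"
  unfolding Gc_def by simp

lemma lag2:
  fixes a b n1 n2 :: real
  assumes "n1\<^sup>2 + n2\<^sup>2 \<noteq> 0"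
  shows "a\<^sup>2 + b\<^sup>2 = ((a*n1+b*n2)\<^sup>2 + (b*n1-a*n2)\<^sup>2)/(n1\<^sup>2+n2\<^sup>2)"
proof -
  have "(a*n1+b*n2)\<^sup>2 + (b*n1-a*n2)\<^sup>2 = (a\<^sup>2 + b\<^sup>2) * (n1\<^sup>2+n2\<^sup>2)" by algebra
  then show ?thesis using assms by simp
qed

lemma lower_id:
  fixes p1 p2 p3 q1 q2 q3 u1 u2 u3 w1 w2 w3 n1 n2 k A C :: real
  assumes s: "n1\<^sup>2+n2\<^sup>2 \<noteq> 0" and h: "n1*u1+n2*w1 = k" "n1*u2+n2*w2 = k" "n1*u3+n2*w3 = k"
  defines "g1 \<equiv> (p1+p2+p3)/3" and "g2 \<equiv> (q1+q2+q3)/3"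
    and "E1 \<equiv> ((p1-u1)+(p2-u2)+(p3-u3))/3" and "E2 \<equiv> ((q1-w1)+(q2-w2)+(q3-w3))/3"
  shows "Gc A C (p1-u1) (p2-u2) (p3-u3) + Gc A C (q1-w1) (q2-w2) (q3-w3) =
    A * ((((p1-g1)*n1+(q1-g2)*n2)\<^sup>2 + ((p2-g1)*n1+(q2-g2)*n2)\<^sup>2 + ((p3-g1)*n1+(q3-g2)*n2)\<^sup>2)/(n1\<^sup>2+n2\<^sup>2))
  + A * ((((q1-w1-E2)*n1 - (p1-u1-E1)*n2)\<^sup>2 + ((q2-w2-E2)*n1 - (p2-u2-E1)*n2)\<^sup>2
         + ((q3-w3-E2)*n1 - (p3-u3-E1)*n2)\<^sup>2)/(n1\<^sup>2+n2\<^sup>2)) + C*(E1\<^sup>2+E2\<^sup>2)"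
proof -
  have L: "Gc A C (p1-u1) (p2-u2) (p3-u3) + Gc A C (q1-w1) (q2-w2) (q3-w3) =
     A * (((p1-u1-E1)\<^sup>2 + (q1-w1-E2)\<^sup>2) + ((p2-u2-E1)\<^sup>2 + (q2-w2-E2)\<^sup>2) + ((p3-u3-E1)\<^sup>2 + (q3-w3-E2)\<^sup>2))
     + C*(E1\<^sup>2+E2\<^sup>2)"
    unfolding Gc_def E1_def E2_def by (simp add: algebra_simps)
  have d: "(p-u-E1)*n1 + (q-w-E2)*n2 = (p-g1)*n1+(q-g2)*n2" if "n1*u+n2*w = k" for p q u w
  proof -
    have "(p-u-E1)*n1 + (q-w-E2)*n2 - ((p-g1)*n1+(q-g2)*n2)
        = -(n1*u+n2*w) + ((n1*u1+n2*w1)+(n1*u2+n2*w2)+(n1*u3+n2*w3))/3"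
      unfolding E1_def E2_def g1_def g2_def by (simp add: field_simps)
    also have "\<dots> = 0" using that h by simp
    finally show ?thesis by simp
  qed
  have t: "(p-u-E1)\<^sup>2 + (q-w-E2)\<^sup>2 = (((p-g1)*n1+(q-g2)*n2)\<^sup>2 + ((q-w-E2)*n1 - (p-u-E1)*n2)\<^sup>2)/(n1\<^sup>2+n2\<^sup>2)"
    if "n1*u+n2*w = k" for p q u w
    using lag2[OF s, of "p-u-E1" "q-w-E2"] d[OF that] by simp
  show ?thesis unfolding L t[OF h(1)] t[OF h(2)] t[OF h(3)] by (simp add: add_divide_distrib algebra_simps)
qed



lemma C_B_coord: "C_B K = (K 2 $ 1 - K 1 $ 1) * (K 3 $ 2 - K 1 $ 2) - (K 3 $ 1 - K 1 $ 1) * (K 2 $ 2 - K 1 $ 2)"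
  unfolding C_B_def det_3 by (simp add: algebra_simps)

definition GG :: "real \<Rightarrow> real \<Rightarrow> config \<Rightarrow> config \<Rightarrow> real" where
  "GG A C b y = Gc A C ((b 1 - y 1)$1) ((b 2 - y 2)$1) ((b 3 - y 3)$1)
              + Gc A C ((b 1 - y 1)$2) ((b 2 - y 2)$2) ((b 3 - y 3)$2)"
definition gp :: "config \<Rightarrow> 2 \<Rightarrow> real" where
  "gp b c = (b 1 $ c + b 2 $ c + b 3 $ c)/3"
definition dd :: "config \<Rightarrow> real^2 \<Rightarrow> nat \<Rightarrow> real" where
  "dd b m i = (b i $ 1 - gp b 1) * m$1 + (b i $ 2 - gp b 2) * m$2"
definition nn :: "real^2 \<Rightarrow> real" where
  "nn m = (m$1)\<^sup>2 + (m$2)\<^sup>2"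
definition SS :: "config \<Rightarrow> real^2 \<Rightarrow> real" where
  "SS b m = ((dd b m 1)\<^sup>2 + (dd b m 2)\<^sup>2 + (dd b m 3)\<^sup>2) / nn m"
definition zc :: "config \<Rightarrow> real^2 \<Rightarrow> config" where
  "zc b m = (\<lambda>i. b i - (dd b m i / nn m) *\<^sub>R m)"

lemma nn_pos: "m \<noteq> 0 \<Longrightarrow> nn m > 0"
  unfolding nn_def by (metis norm2_coord zero_less_norm_iff zero_less_power)

lemma dd_sum: "dd b m 1 + dd b m 2 + dd b m 3 = 0"
  unfolding dd_def gp_def by (simp add: field_simps)

lemma cand_CB:
  assumes m: "m \<noteq> 0" and y: "\<forall>i\<in>{1,2,3}. y i = zc b m i"
  shows "C_B y = 0"
proof -
  have s: "nn m \<noteq> 0" using nn_pos[OF m] by simp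
  have s2: "(m$1)\<^sup>2 + (m$2)\<^sup>2 \<noteq> 0" using s unfolding nn_def .
  have e: "m$1 * (y i)$1 + m$2 * (y i)$2 = m$1 * gp b 1 + m$2 * gp b 2" if "i \<in> {1,2,3}" for i
  proof -
    have yi: "y i = b i - (dd b m i / nn m) *\<^sub>R m" using y that unfolding zc_def by auto
    have "m$1 * (y i)$1 + m$2 * (y i)$2 = m$1 * (b i $ 1) + m$2 * (b i $ 2) - dd b m i / nn m * nn m"
      unfolding yi nn_def by (simp add: algebra_simps power2_eq_square add_divide_distrib)
    also have "\<dots> = m$1 * (b i $ 1) + m$2 * (b i $ 2) - dd b m i" using s by simp
    also have "\<dots> = m$1 * gp b 1 + m$2 * gp b 2" unfolding dd_def by (simp add: algebra_simps)
    finally show ?thesis .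
  qed
  show ?thesis unfolding C_B_coord
    by (rule coll_normal[OF s2 e e e]) auto
qed

lemma cand_GG:
  assumes m: "m \<noteq> 0"
  shows "GG A C b (zc b m) = A * SS b m"
proof -
  have s: "nn m \<noteq> 0" using nn_pos[OF m] by simp
  have c: "(b i - zc b m i) $ j = dd b m i / nn m * m $ j" for i j
    unfolding zc_def by simp
  have z: "dd b m 1 / nn m * m $ j + dd b m 2 / nn m * m $ j + dd b m 3 / nn m * m $ j = 0" for j
  proof -
    have "dd b m 1 / nn m * m $ j + dd b m 2 / nn m * m $ j + dd b m 3 / nn m * m $ j
       = (dd b m 1 + dd b m 2 + dd b m 3) / nn m * m $ j" using s by (simp add: field_simps)
    then show ?thesis using dd_sum by simp
  qed
  have "GG A C b (zc b m) = A * ((dd b m 1 / nn m * m $ 1)\<^sup>2 + (dd b m 2 / nn m * m $ 1)\<^sup>2 + (dd b m 3 / nn m * m $ 1)\<^sup>2)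
     + A * ((dd b m 1 / nn m * m $ 2)\<^sup>2 + (dd b m 2 / nn m * m $ 2)\<^sup>2 + (dd b m 3 / nn m * m $ 2)\<^sup>2)"
    unfolding GG_def c using Gc_zero_mean[OF z] by simp
  also have "\<dots> = A * (((dd b m 1)\<^sup>2 + (dd b m 2)\<^sup>2 + (dd b m 3)\<^sup>2) / (nn m)\<^sup>2 * nn m)"
    unfolding nn_def by (simp add: power_divide power_mult_distrib field_simps add_divide_distrib)
  also have "\<dots> = A * SS b m" unfolding SS_def using s by (simp add: power2_eq_square)
  finally show ?thesis .
qed



lemma pedal_real:
  fixes u w u1 w1 p q n1 n2 k :: real
  assumes s: "n1\<^sup>2 + n2\<^sup>2 \<noteq> 0" and h: "n1*u+n2*w = k" "n1*u1+n2*w1 = k"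
    and c: "(q-w)*n1 - (p-u)*n2 = 0"
  shows "u = u1 + ((p-u1)*(-n2) + (q-w1)*n1)/((-n2)\<^sup>2+n1\<^sup>2) * (-n2)"
    and "w = w1 + ((p-u1)*(-n2) + (q-w1)*n1)/((-n2)\<^sup>2+n1\<^sup>2) * n1"
proof -
  have T: "(p-u1)*(-n2) + (q-w1)*n1 = (w-w1)*n1 - (u-u1)*n2"
    using c by (simp add: algebra_simps)
  have h2: "n2*(w-w1) = -(n1*(u-u1))" using h by (simp add: algebra_simps)
  have h1: "n1*(u-u1) = -(n2*(w-w1))" using h by (simp add: algebra_simps)
  have s': "(-n2)\<^sup>2+n1\<^sup>2 \<noteq> 0" using s by (simp add: add.commute)
  have A: "((w-w1)*n1 - (u-u1)*n2) * (-n2) = (u-u1) * ((-n2)\<^sup>2+n1\<^sup>2)"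
  proof -
    have "((w-w1)*n1 - (u-u1)*n2) * (-n2) = -(n2*(w-w1))*n1 + (u-u1)*n2\<^sup>2"
      by (simp add: algebra_simps power2_eq_square)
    also have "\<dots> = (u-u1) * ((-n2)\<^sup>2+n1\<^sup>2)" unfolding h2 by (simp add: algebra_simps power2_eq_square)
    finally show ?thesis .
  qed
  have B: "((w-w1)*n1 - (u-u1)*n2) * n1 = (w-w1) * ((-n2)\<^sup>2+n1\<^sup>2)"
  proof -
    have "((w-w1)*n1 - (u-u1)*n2) * n1 = (w-w1)*n1\<^sup>2 - (n1*(u-u1))*n2"
      by (simp add: algebra_simps power2_eq_square)
    also have "\<dots> = (w-w1) * ((-n2)\<^sup>2+n1\<^sup>2)" unfolding h1 by (simp add: algebra_simps power2_eq_square)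
    finally show ?thesis .
  qed
  show "u = u1 + ((p-u1)*(-n2) + (q-w1)*n1)/((-n2)\<^sup>2+n1\<^sup>2) * (-n2)"
    unfolding T using A s' by (simp add: field_simps)
  show "w = w1 + ((p-u1)*(-n2) + (q-w1)*n1)/((-n2)\<^sup>2+n1\<^sup>2) * n1"
    unfolding T using B s' by (simp add: field_simps)
qed

lemma var3:
  fixes z1 z2 z3 c :: real
  shows "(z1-(z1+z2+z3)/3)\<^sup>2 + (z2-(z1+z2+z3)/3)\<^sup>2 + (z3-(z1+z2+z3)/3)\<^sup>2 \<le> (z1-c)\<^sup>2 + (z2-c)\<^sup>2 + (z3-c)\<^sup>2"
proof -
  have "(z1-c)\<^sup>2 + (z2-c)\<^sup>2 + (z3-c)\<^sup>2 = (z1-(z1+z2+z3)/3)\<^sup>2 + (z2-(z1+z2+z3)/3)\<^sup>2 + (z3-(z1+z2+z3)/3)\<^sup>2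
     + 3 * ((z1+z2+z3)/3 - c)\<^sup>2"
    by (simp add: power2_eq_square field_simps)
  then show ?thesis by simp
qed

lemma SS_le_line:
  fixes c w :: "real^2" and b :: config
  assumes w: "w \<noteq> 0"
  shows "SS b (vector [w$2, -(w$1)]) \<le> (\<Sum>i\<in>{1,2,3::nat}. (infdist (b i) (line c w))\<^sup>2)"
proof -
  define m :: "real^2" where "m = vector [w$2, -(w$1)]"
  have nm: "nn m = (w$1)\<^sup>2 + (w$2)\<^sup>2" unfolding m_def nn_def by simp
  have npos: "(w$1)\<^sup>2 + (w$2)\<^sup>2 > 0" using nn_pos[OF w] unfolding nn_def .
  define z where "z i = (b i)$1 * w$2 - (b i)$2 * w$1" for i
  define cc where "cc = c$1 * w$2 - c$2 * w$1"
  have dz: "dd b m i = z i - (z 1 + z 2 + z 3)/3" for i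
    unfolding dd_def gp_def m_def z_def by (simp add: field_simps)
  have iz: "(infdist (b i) (line c w))\<^sup>2 = (z i - cc)\<^sup>2 / ((w$1)\<^sup>2 + (w$2)\<^sup>2)" for i
    unfolding infdist_line[OF w] z_def cc_def by (simp add: algebra_simps)
  have "SS b m = ((z 1 - (z 1 + z 2 + z 3)/3)\<^sup>2 + (z 2 - (z 1 + z 2 + z 3)/3)\<^sup>2 + (z 3 - (z 1 + z 2 + z 3)/3)\<^sup>2)
      / ((w$1)\<^sup>2 + (w$2)\<^sup>2)"
    unfolding SS_def dz nm ..
  also have "\<dots> \<le> ((z 1 - cc)\<^sup>2 + (z 2 - cc)\<^sup>2 + (z 3 - cc)\<^sup>2) / ((w$1)\<^sup>2 + (w$2)\<^sup>2)"
    using npos var3 by (simp add: divide_right_mono)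
  also have "\<dots> = (\<Sum>i\<in>{1,2,3::nat}. (infdist (b i) (line c w))\<^sup>2)"
    unfolding iz by (simp add: add_divide_distrib)
  finally show ?thesis unfolding m_def .
qed



lemma abstract:
  fixes Phi :: "config \<Rightarrow> config \<Rightarrow> real" and K K' b :: config and A C :: real
  assumes A: "A > 0" and C: "C > 0"
    and lower: "\<And>K''. GG A C b K'' \<le> Phi K K''"
    and attain: "\<And>y. \<exists>K''. (\<forall>i\<in>{1,2,3}. K'' i = y i) \<and> Phi K K'' = GG A C b y"
    and CB: "C_B K' = 0" and min: "\<forall>K''. C_B K'' = 0 \<longrightarrow> Phi K K' \<le> Phi K K''"
  shows "\<exists>a v. is_regression_line a v b \<and> (\<forall>i\<in>{1,2,3::nat}. K' i = pedal a v (b i))"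
proof -
  have up: "Phi K K' \<le> A * SS b m" if m: "m \<noteq> 0" for m
  proof -
    obtain K'' where K'': "\<forall>i\<in>{1,2,3}. K'' i = zc b m i" "Phi K K'' = GG A C b (zc b m)"
      using attain by blast
    have "C_B K'' = 0" by (rule cand_CB[OF m K''(1)])
    then have "Phi K K' \<le> Phi K K''" using min by blast
    then show ?thesis using K''(2) cand_GG[OF m] by simp
  qed
  obtain n1 n2 k where nk: "n1\<^sup>2 + n2\<^sup>2 \<noteq> 0" "n1 * K' 1 $ 1 + n2 * K' 1 $ 2 = k"
      "n1 * K' 2 $ 1 + n2 * K' 2 $ 2 = k" "n1 * K' 3 $ 1 + n2 * K' 3 $ 2 = k"
    using normal_coll[OF CB[unfolded C_B_coord]] by blast
  define n :: "real^2" where "n = vector [n1, n2]"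
  have n0: "n \<noteq> 0" using nk(1) unfolding n_def vec2_eq by auto
  have spos: "n1\<^sup>2 + n2\<^sup>2 > 0" using nk(1) by (simp add: add_pos_nonneg sum_power2_gt_zero_iff)
  define E1 where "E1 = ((b 1 $ 1 - K' 1 $ 1) + (b 2 $ 1 - K' 2 $ 1) + (b 3 $ 1 - K' 3 $ 1))/3"
  define E2 where "E2 = ((b 1 $ 2 - K' 1 $ 2) + (b 2 $ 2 - K' 2 $ 2) + (b 3 $ 2 - K' 3 $ 2))/3"
  define cr where "cr i = (b i $ 2 - K' i $ 2 - E2) * n1 - (b i $ 1 - K' i $ 1 - E1) * n2" for i
  have LI: "GG A C b K' = A * SS b n + A * (((cr 1)\<^sup>2 + (cr 2)\<^sup>2 + (cr 3)\<^sup>2) / (n1\<^sup>2+n2\<^sup>2))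
      + C * (E1\<^sup>2 + E2\<^sup>2)"
  proof -
    have "GG A C b K' = Gc A C (b 1 $ 1 - K' 1 $ 1) (b 2 $ 1 - K' 2 $ 1) (b 3 $ 1 - K' 3 $ 1)
        + Gc A C (b 1 $ 2 - K' 1 $ 2) (b 2 $ 2 - K' 2 $ 2) (b 3 $ 2 - K' 3 $ 2)"
      unfolding GG_def by simp
    also have "\<dots> = A * SS b n + A * (((cr 1)\<^sup>2 + (cr 2)\<^sup>2 + (cr 3)\<^sup>2) / (n1\<^sup>2+n2\<^sup>2))
      + C * (E1\<^sup>2 + E2\<^sup>2)"
      unfolding lower_id[OF nk] SS_def dd_def gp_def nn_def n_def cr_def E1_def E2_def
      by simp
    finally show ?thesis .
  qed
  have GGle: "A * SS b n + A * (((cr 1)\<^sup>2 + (cr 2)\<^sup>2 + (cr 3)\<^sup>2) / (n1\<^sup>2+n2\<^sup>2))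
      + C * (E1\<^sup>2 + E2\<^sup>2) \<le> A * SS b n"
    using lower[of K'] up[OF n0] LI by simp
  have X0: "0 \<le> A * (((cr 1)\<^sup>2 + (cr 2)\<^sup>2 + (cr 3)\<^sup>2) / (n1\<^sup>2+n2\<^sup>2))"
    using A spos by simp
  have Y0: "0 \<le> C * (E1\<^sup>2 + E2\<^sup>2)" using C by simp
  have Y: "C * (E1\<^sup>2 + E2\<^sup>2) = 0" using GGle X0 Y0 by linarith
  then have E: "E1 = 0" "E2 = 0" using C by (auto simp: sum_power2_eq_zero_iff)
  have X: "A * (((cr 1)\<^sup>2 + (cr 2)\<^sup>2 + (cr 3)\<^sup>2) / (n1\<^sup>2+n2\<^sup>2)) = 0" using GGle X0 Y0 by linarith
  then have "(cr 1)\<^sup>2 + (cr 2)\<^sup>2 + (cr 3)\<^sup>2 = 0" using A spos nk(1) by auto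
  then have cr0: "cr 1 = 0" "cr 2 = 0" "cr 3 = 0"
    by (smt (verit) power2_less_eq_zero_iff zero_le_power2)+
  define v :: "real^2" where "v = vector [-n2, n1]"
  have v0: "v \<noteq> 0" using nk(1) unfolding v_def vec2_eq by auto
  have ped: "K' i = pedal (K' 1) v (b i)" if i: "i \<in> {1,2,3}" for i
  proof -
    have ci: "(b i $ 2 - K' i $ 2) * n1 - (b i $ 1 - K' i $ 1) * n2 = 0"
      using i cr0 E unfolding cr_def by auto
    have hi: "n1 * K' i $ 1 + n2 * K' i $ 2 = k" using i nk by auto
    note P = pedal_real[OF nk(1) hi nk(2) ci]
    have p1: "pedal (K' 1) v (b i) $ 1 = K' 1 $ 1 + ((b i $ 1 - K' 1 $ 1)*(-n2) + (b i $ 2 - K' 1 $ 2)*n1)/((-n2)\<^sup>2+n1\<^sup>2) * (-n2)"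
      unfolding pedal_def v_def inner_coord by (simp add: power2_eq_square)
    have p2: "pedal (K' 1) v (b i) $ 2 = K' 1 $ 2 + ((b i $ 1 - K' 1 $ 1)*(-n2) + (b i $ 2 - K' 1 $ 2)*n1)/((-n2)\<^sup>2+n1\<^sup>2) * n1"
      unfolding pedal_def v_def inner_coord by (simp add: power2_eq_square)
    show ?thesis unfolding vec2_eq p1 p2 using P by simp
  qed
  have reg: "is_regression_line (K' 1) v b"
    unfolding is_regression_line_def
  proof (intro conjI allI impI v0)
    fix c w :: "real^2" assume w: "w \<noteq> 0"
    have gk: "gp b 1 * n1 + gp b 2 * n2 = k"
    proof -
      have g: "gp b 1 = (K' 1 $ 1 + K' 2 $ 1 + K' 3 $ 1)/3" "gp b 2 = (K' 1 $ 2 + K' 2 $ 2 + K' 3 $ 2)/3"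
        using E unfolding E1_def E2_def gp_def by (simp_all add: field_simps)
      have "gp b 1 * n1 + gp b 2 * n2 = ((n1 * K' 1 $ 1 + n2 * K' 1 $ 2) + (n1 * K' 2 $ 1 + n2 * K' 2 $ 2)
          + (n1 * K' 3 $ 1 + n2 * K' 3 $ 2))/3"
        unfolding g by (simp add: field_simps)
      then show ?thesis using nk(2-4) by simp
    qed
    have trm: "(infdist (b i) (line (K' 1) v))\<^sup>2 = (dd b n i)\<^sup>2 / (n1\<^sup>2 + n2\<^sup>2)" for i
    proof -
      have "(b i - K' 1) $ 1 * v $ 2 - (b i - K' 1) $ 2 * v $ 1 = dd b n i"
        unfolding v_def dd_def n_def using gk nk(2) by (simp add: algebra_simps)
      moreover have "(v $ 1)\<^sup>2 + (v $ 2)\<^sup>2 = n1\<^sup>2 + n2\<^sup>2" unfolding v_def by simp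
      ultimately show ?thesis unfolding infdist_line[OF v0] by simp
    qed
    have "(\<Sum>i\<in>{1,2,3::nat}. (infdist (b i) (line (K' 1) v))\<^sup>2) = SS b n"
      unfolding trm SS_def nn_def n_def by (simp add: add_divide_distrib)
    also have "\<dots> \<le> SS b (vector [w$2, -(w$1)])"
    proof -
      have m0: "(vector [w$2, -(w$1)] :: real^2) \<noteq> 0" using w unfolding vec2_eq by auto
      have "A * SS b n \<le> A * SS b (vector [w$2, -(w$1)])"
        using up[OF m0] lower[of K'] LI X0 Y0 by linarith
      then show ?thesis using A by simp
    qed
    also have "\<dots> \<le> (\<Sum>i\<in>{1,2,3::nat}. (infdist (b i) (line c w))\<^sup>2)"
      by (rule SS_le_line[OF w])
    finally show "(\<Sum>i\<in>{1,2,3::nat}. (infdist (b i) (line (K' 1) v))\<^sup>2)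
        \<le> (\<Sum>i\<in>{1,2,3::nat}. (infdist (b i) (line c w))\<^sup>2)" .
  qed
  show ?thesis using reg ped by blast
qed


definition sq3 :: "(nat \<Rightarrow> real) \<Rightarrow> nat \<Rightarrow> nat \<Rightarrow> real" where
  "sq3 x i j = (1/3) * ((x i)\<^sup>2 + (x j)\<^sup>2 + x i * x j)"

definition Ftri :: "(nat \<Rightarrow> real) \<Rightarrow> real" where
  "Ftri x = (1/7) * (sq3 x 1 4 + sq3 x 2 5 + sq3 x 3 6 + sq3 x 1 2 + sq3 x 2 3 + sq3 x 1 3
     + (1/6) * ((x 4)\<^sup>2 + (x 5)\<^sup>2 + (x 6)\<^sup>2 + x 4 * x 6 + x 4 * x 5 + x 6 * x 5))"

definition Fseg :: "(nat \<Rightarrow> real) \<Rightarrow> real" where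
  "Fseg x = (1/9) * (sq3 x 1 2 + sq3 x 2 3 + sq3 x 1 3 + sq3 x 1 4 + sq3 x 2 5 + sq3 x 3 6
     + sq3 x 4 5 + sq3 x 5 6 + sq3 x 4 6)"

definition Phi_tri :: "config \<Rightarrow> config \<Rightarrow> real" where
  "Phi_tri K K' = (1/7) * ((\<Sum>(i,j)\<leftarrow>I3. seg_dist2 K K' i j) + tri_dist2 K K' 4 5 6)"
definition Phi_seg :: "config \<Rightarrow> config \<Rightarrow> real" where
  "Phi_seg K K' = (1/9) * (\<Sum>(i,j)\<leftarrow>I4. seg_dist2 K K' i j)"

lemma Phi_tri_coord: "Phi_tri K K' = Ftri (\<lambda>i. (K i - K' i)$1) + Ftri (\<lambda>i. (K i - K' i)$2)"
  unfolding Phi_tri_def Ftri_def I3_def seg_dist2_def tri_dist2_def sq3_def norm2_coord inner_coord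
  by (simp add: algebra_simps)

lemma Phi_seg_coord: "Phi_seg K K' = Fseg (\<lambda>i. (K i - K' i)$1) + Fseg (\<lambda>i. (K i - K' i)$2)"
  unfolding Phi_seg_def Fseg_def I4_def seg_dist2_def sq3_def norm2_coord inner_coord
  by (simp add: algebra_simps)

definition ltri :: "nat \<Rightarrow> nat \<Rightarrow> real" where
  "ltri j i = (if j = i + 3 then -7/20 else 1/20)"
definition lseg :: "nat \<Rightarrow> nat \<Rightarrow> real" where
  "lseg j i = (if j = i + 3 then -7/40 else 1/40)"

definition Qtri :: "real \<Rightarrow> real \<Rightarrow> real \<Rightarrow> real" where
  "Qtri u v w = (1/14) * (u\<^sup>2 + v\<^sup>2 + w\<^sup>2) + (1/42) * (u * v + v * w + u * w)"
definition Qseg :: "real \<Rightarrow> real \<Rightarrow> real \<Rightarrow> real" where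
  "Qseg u v w = (1/9) * (u\<^sup>2 + v\<^sup>2 + w\<^sup>2) + (1/27) * (u * v + v * w + u * w)"

lemma Qtri_nonneg: "0 \<le> Qtri u v w"
proof -
  have "Qtri u v w = (5/84) * (u\<^sup>2 + v\<^sup>2 + w\<^sup>2) + (1/84) * (u+v+w)\<^sup>2"
    unfolding Qtri_def by (simp add: power2_eq_square field_simps)
  then show ?thesis by simp
qed
lemma Qseg_nonneg: "0 \<le> Qseg u v w"
proof -
  have "Qseg u v w = (5/54) * (u\<^sup>2 + v\<^sup>2 + w\<^sup>2) + (1/54) * (u+v+w)\<^sup>2"
    unfolding Qseg_def by (simp add: power2_eq_square field_simps)
  then show ?thesis by simp
qed

lemma Ftri_decomp0:
  "Ftri x = Gc (23/210) (31/56) (x 1) (x 2) (x 3)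
     + ((1/14) * ((x 4 - (ltri 4 1 * x 1 + ltri 4 2 * x 2 + ltri 4 3 * x 3))\<^sup>2
                + (x 5 - (ltri 5 1 * x 1 + ltri 5 2 * x 2 + ltri 5 3 * x 3))\<^sup>2
                + (x 6 - (ltri 6 1 * x 1 + ltri 6 2 * x 2 + ltri 6 3 * x 3))\<^sup>2)
      + (1/42) * ((x 4 - (ltri 4 1 * x 1 + ltri 4 2 * x 2 + ltri 4 3 * x 3))
                 * (x 5 - (ltri 5 1 * x 1 + ltri 5 2 * x 2 + ltri 5 3 * x 3))
               + (x 5 - (ltri 5 1 * x 1 + ltri 5 2 * x 2 + ltri 5 3 * x 3))
                 * (x 6 - (ltri 6 1 * x 1 + ltri 6 2 * x 2 + ltri 6 3 * x 3))
               + (x 4 - (ltri 4 1 * x 1 + ltri 4 2 * x 2 + ltri 4 3 * x 3))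
                 * (x 6 - (ltri 6 1 * x 1 + ltri 6 2 * x 2 + ltri 6 3 * x 3))))"
  unfolding Ftri_def Gc_def sq3_def ltri_def by (simp add: power2_eq_square field_simps)

lemma Fseg_decomp0:
  "Fseg x = Gc (4/45) (7/16) (x 1) (x 2) (x 3)
     + ((1/9) * ((x 4 - (lseg 4 1 * x 1 + lseg 4 2 * x 2 + lseg 4 3 * x 3))\<^sup>2
                + (x 5 - (lseg 5 1 * x 1 + lseg 5 2 * x 2 + lseg 5 3 * x 3))\<^sup>2
                + (x 6 - (lseg 6 1 * x 1 + lseg 6 2 * x 2 + lseg 6 3 * x 3))\<^sup>2)
      + (1/27) * ((x 4 - (lseg 4 1 * x 1 + lseg 4 2 * x 2 + lseg 4 3 * x 3))
                 * (x 5 - (lseg 5 1 * x 1 + lseg 5 2 * x 2 + lseg 5 3 * x 3))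
               + (x 5 - (lseg 5 1 * x 1 + lseg 5 2 * x 2 + lseg 5 3 * x 3))
                 * (x 6 - (lseg 6 1 * x 1 + lseg 6 2 * x 2 + lseg 6 3 * x 3))
               + (x 4 - (lseg 4 1 * x 1 + lseg 4 2 * x 2 + lseg 4 3 * x 3))
                 * (x 6 - (lseg 6 1 * x 1 + lseg 6 2 * x 2 + lseg 6 3 * x 3))))"
  unfolding Fseg_def Gc_def sq3_def lseg_def by (simp add: power2_eq_square field_simps)


lemma Ftri_decomp:
  "Ftri x = Gc (23/210) (31/56) (x 1) (x 2) (x 3)
     + Qtri (x 4 - (ltri 4 1 * x 1 + ltri 4 2 * x 2 + ltri 4 3 * x 3))
            (x 5 - (ltri 5 1 * x 1 + ltri 5 2 * x 2 + ltri 5 3 * x 3))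
            (x 6 - (ltri 6 1 * x 1 + ltri 6 2 * x 2 + ltri 6 3 * x 3))"
  unfolding Ftri_decomp0 Qtri_def by simp
lemma Fseg_decomp:
  "Fseg x = Gc (4/45) (7/16) (x 1) (x 2) (x 3)
     + Qseg (x 4 - (lseg 4 1 * x 1 + lseg 4 2 * x 2 + lseg 4 3 * x 3))
            (x 5 - (lseg 5 1 * x 1 + lseg 5 2 * x 2 + lseg 5 3 * x 3))
            (x 6 - (lseg 6 1 * x 1 + lseg 6 2 * x 2 + lseg 6 3 * x 3))"
  unfolding Fseg_decomp0 Qseg_def by simp

definition Kc :: "(nat \<Rightarrow> nat \<Rightarrow> real) \<Rightarrow> config \<Rightarrow> config \<Rightarrow> config" where
  "Kc L K y = (\<lambda>i. if i \<in> {1,2,3} then y i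
      else K i - (L i 1 *\<^sub>R (K 1 - y 1) + L i 2 *\<^sub>R (K 2 - y 2) + L i 3 *\<^sub>R (K 3 - y 3)))"

lemma GG_cong: "\<forall>i\<in>{1,2,3}. K i = b i \<Longrightarrow> GG A C b y =
   Gc A C ((K 1 - y 1)$1) ((K 2 - y 2)$1) ((K 3 - y 3)$1) + Gc A C ((K 1 - y 1)$2) ((K 2 - y 2)$2) ((K 3 - y 3)$2)"
  unfolding GG_def by simp

lemma tri_lower: "\<forall>i\<in>{1,2,3}. K i = b i \<Longrightarrow> GG (23/210) (31/56) b K'' \<le> Phi_tri K K''"
  unfolding GG_cong Phi_tri_coord Ftri_decomp using Qtri_nonneg
  by (smt (verit))

lemma seg_lower: "\<forall>i\<in>{1,2,3}. K i = b i \<Longrightarrow> GG (4/45) (7/16) b K'' \<le> Phi_seg K K''"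
  unfolding GG_cong Phi_seg_coord Fseg_decomp using Qseg_nonneg
  by (smt (verit))

lemma tri_attain: "\<forall>i\<in>{1,2,3}. K i = b i \<Longrightarrow>
   \<exists>K''. (\<forall>i\<in>{1,2,3}. K'' i = y i) \<and> Phi_tri K K'' = GG (23/210) (31/56) b y"
  apply (rule exI[of _ "Kc ltri K y"])
  apply (simp add: GG_cong Phi_tri_coord Ftri_decomp Kc_def Qtri_def)
  done

lemma seg_attain: "\<forall>i\<in>{1,2,3}. K i = b i \<Longrightarrow>
   \<exists>K''. (\<forall>i\<in>{1,2,3}. K'' i = y i) \<and> Phi_seg K K'' = GG (4/45) (7/16) b y"
  apply (rule exI[of _ "Kc lseg K y"])
  apply (simp add: GG_cong Phi_seg_coord Fseg_decomp Kc_def Qseg_def)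
  done



lemma D_tri_diff: "(\<And>i. K i - K' i = L i - L' i) \<Longrightarrow> D_tri K K' = D_tri L L'"
  unfolding D_tri_def seg_dist2_def tri_dist2_def by simp
lemma D_seg_diff: "(\<And>i. K i - K' i = L i - L' i) \<Longrightarrow> D_seg K K' = D_seg L L'"
  unfolding D_seg_def seg_dist2_def by simp

lemma C_B_cong: "(\<forall>i\<in>{1,2,3}. K i = L i) \<Longrightarrow> C_B K = C_B L"
  unfolding C_B_coord by simp

lemma rpr_base: "i \<in> {1,2,3} \<Longrightarrow> rpr_config b p R t i = b i"
  unfolding rpr_config_def by simp

lemma INF_shift:
  fixes D :: "config \<Rightarrow> config \<Rightarrow> real"
  assumes Dd: "\<And>K K' L L'. (\<And>i. K i - K' i = L i - L' i) \<Longrightarrow> D K K' = D L L'"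
    and b: "\<forall>i\<in>{1,2,3}. K1 i = K2 i"
  shows "(INF K''\<in>{K''. C_B K'' = 0}. D K1 K'') = (INF K''\<in>{K''. C_B K'' = 0}. D K2 K'')"
proof -
  have img: "(\<lambda>K''. D K1 K'') ` {K''. C_B K'' = 0} \<subseteq> (\<lambda>K''. D K2 K'') ` {K''. C_B K'' = 0}"
    if b: "\<forall>i\<in>{1,2,3}. K1 i = K2 i" for K1 K2
  proof
    fix z assume "z \<in> (\<lambda>K''. D K1 K'') ` {K''. C_B K'' = 0}"
    then obtain x where x: "C_B x = 0" "z = D K1 x" by auto
    define y where "y = (\<lambda>i. x i - K1 i + K2 i)"
    have "C_B y = C_B x" by (rule C_B_cong) (use b in \<open>simp add: y_def\<close>)
    moreover have "D K1 x = D K2 y" by (rule Dd) (simp add: y_def)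
    ultimately show "z \<in> (\<lambda>K''. D K2 K'') ` {K''. C_B K'' = 0}" using x by auto
  qed
  have "(\<lambda>K''. D K1 K'') ` {K''. C_B K'' = 0} = (\<lambda>K''. D K2 K'') ` {K''. C_B K'' = 0}"
    using img[OF b] img[of K2 K1] b by auto
  then show ?thesis by simp
qed

theorem theorem2:
  fixes b p :: config and R R2 :: "real^2^2" and t t2 :: point
    and D :: "config \<Rightarrow> config \<Rightarrow> real" and K' :: config
  assumes "D = D_tri \<or> D = D_seg"
    and "R \<in> SO2" and "R2 \<in> SO2"
  shows "(C_B K' = 0 \<and> (\<forall>K''. C_B K'' = 0 \<longrightarrow> D (rpr_config b p R t) K' \<le> D (rpr_config b p R t) K'')
           \<longrightarrow> (\<exists>a v. is_regression_line a v b \<and> (\<forall>i\<in>{1,2,3::nat}. K' i = pedal a v (b i))))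
       \<and> (INF K''\<in>{K''. C_B K'' = 0}. D (rpr_config b p R t) K'')
           = (INF K''\<in>{K''. C_B K'' = 0}. D (rpr_config b p R2 t2) K'')"
proof (intro conjI impI)
  define K where "K = rpr_config b p R t"
  have bK: "\<forall>i\<in>{1,2,3}. K i = b i" unfolding K_def using rpr_base by blast
  assume H: "C_B K' = 0 \<and> (\<forall>K''. C_B K'' = 0 \<longrightarrow> D (rpr_config b p R t) K' \<le> D (rpr_config b p R t) K'')"
  then have CB: "C_B K' = 0" and mn: "\<forall>K''. C_B K'' = 0 \<longrightarrow> D K K' \<le> D K K''"
    unfolding K_def by auto
  from assms(1) show "\<exists>a v. is_regression_line a v b \<and> (\<forall>i\<in>{1,2,3::nat}. K' i = pedal a v (b i))"
  proof
    assume D: "D = D_tri"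
    have "\<forall>K''. C_B K'' = 0 \<longrightarrow> Phi_tri K K' \<le> Phi_tri K K''"
      using mn unfolding D D_tri_def Phi_tri_def by simp
    then show ?thesis
      using abstract[where Phi=Phi_tri and K=K and A="23/210" and C="31/56" and b=b, OF _ _ tri_lower[OF bK] tri_attain[OF bK] CB] by simp
  next
    assume D: "D = D_seg"
    have "\<forall>K''. C_B K'' = 0 \<longrightarrow> Phi_seg K K' \<le> Phi_seg K K''"
      using mn unfolding D D_seg_def Phi_seg_def by simp
    then show ?thesis
      using abstract[where Phi=Phi_seg and K=K and A="4/45" and C="7/16" and b=b, OF _ _ seg_lower[OF bK] seg_attain[OF bK] CB] by simp
  qed
next
  have b: "\<forall>i\<in>{1,2,3}. rpr_config b p R t i = rpr_config b p R2 t2 i" using rpr_base by simp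
  from assms(1) show "(INF K''\<in>{K''. C_B K'' = 0}. D (rpr_config b p R t) K'')
           = (INF K''\<in>{K''. C_B K'' = 0}. D (rpr_config b p R2 t2) K'')"
  proof
    assume D: "D = D_tri"
    show ?thesis unfolding D by (rule INF_shift[OF _ b]) (rule D_tri_diff)
  next
    assume D: "D = D_seg"
    show ?thesis unfolding D by (rule INF_shift[OF _ b]) (rule D_seg_diff)
  qed
qed

end
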